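(* Let $v\in C^1([0,T];C^1(\mathcal K^* ))$ and $B\in C([0,T];C^0(\mathcal K^* ))$ solve the discrete incompressible Euler equations $\frac{dv}{dt}+I_v(\tilde D_1v)+\tilde D_0B=0$, $D_2M_1v=0$. Then the discrete kinetic energy $E^{\rm kin}(t)=\frac12\langle v,v\rangle_1=\frac12\sum_j\frac{A_j}{\ell_j^*}v_j^2$ is constant in time: $\frac{dE^{\rm kin}}{dt}=0$.
   Context: $C^k(\mathcal K^* )$ denotes real dual $k$-cochains on a Delaunay–Voronoi cell complex; velocity $v$ has one value per dual edge $e_j^*$ of length $\ell_j^*$, dual to primal face $f_j$ of area $A_j$. $M_1$ is the positive diagonal matrix with $(M_1)_{jj}=A_j/\ell_j^*$, $\langle v,w\rangle_1=v^TM_1w$. $\tilde D_0,\tilde D_1$ are dual coboundary matrices, $D_2$ the primal coboundary from faces to cells, satisfying summation by parts $\langle\tilde D_0B,v\rangle_1=B^TD_2M_1v$. The contraction $I_v:C^2(\mathcal K^* )\to C^1(\mathcal K^* )$ is defined by $M_1I_v(\omega)=\frac12(\tilde U(v)\omega-\tilde D_1^T\tilde U(v)^Tv)$, where $\tilde U(v)$ is a matrix (of the shape of $\tilde D_1^T$) depending linearly on $v$. *)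

theory Defs
  imports "HOL-Analysis.Analysis"
begin

text \<open>Dual cochains as Cartesian vectors: index type 'c = dual vertices (primal cells),
 'e = dual edges (primal faces), 'f = dual faces (primal edges).
 The mass matrix M_1 = diag(A_j / l_j).\<close>

definition M1 :: "('e::finite \<Rightarrow> real) \<Rightarrow> ('e \<Rightarrow> real) \<Rightarrow> real^'e^'e" where
  "M1 A l = (\<chi> i j. if i = j then A j / l j else 0)"

definition ip1 :: "('e::finite \<Rightarrow> real) \<Rightarrow> ('e \<Rightarrow> real) \<Rightarrow> real^'e \<Rightarrow> real^'e \<Rightarrow> real" where
  "ip1 A l v w = v \<bullet> (M1 A l *v w)"

definition contraction ::
  "('e::finite \<Rightarrow> real) \<Rightarrow> ('e \<Rightarrow> real) \<Rightarrow> real^'e^('f::finite) \<Rightarrow> (real^'e \<Rightarrow> real^'f^'e)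
     \<Rightarrow> real^'e \<Rightarrow> real^'f \<Rightarrow> real^'e" where
  "contraction A l D1 U v \<omega> =
     matrix_inv (M1 A l) *v ((1/2) *\<^sub>R (U v *v \<omega> - transpose D1 *v (transpose (U v) *v v)))"

definition Ekin :: "('e::finite \<Rightarrow> real) \<Rightarrow> ('e \<Rightarrow> real) \<Rightarrow> real^'e \<Rightarrow> real" where
  "Ekin A l v = (1/2) * ip1 A l v v"

end

theory Submission
  imports Defs
begin

lemma M1_inv: fixes A :: "'e::finite \<Rightarrow> real" assumes "\<And>j. A j > 0" "\<And>j. l j > (0::real)"
  shows "M1 A l ** matrix_inv (M1 A l) = mat 1"
proof -
  let ?N = "(\<chi> i j. if i = j then l j / A j else 0) :: real^'e^'e"
  have a1: "(M1 A l ** ?N) $ i $ j = mat 1 $ i $ j" for i j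
  proof -
    have "(M1 A l ** ?N) $ i $ j = (\<Sum>k\<in>UNIV. (if i = k then A k / l k else 0) * (if k = j then l j / A j else 0))"
      by (simp add: matrix_matrix_mult_def M1_def)
    also have "\<dots> = (if i = j then A j / l j * (l j / A j) else 0)"
      by (simp add: if_distrib[of "\<lambda>x. x * _"] sum.delta cong: if_cong)
    also have "\<dots> = mat 1 $ i $ j" using assms[of j] by (simp add: mat_def)
    finally show ?thesis .
  qed
  have a2: "(?N ** M1 A l) $ i $ j = mat 1 $ i $ j" for i j
  proof -
    have "(?N ** M1 A l) $ i $ j = (\<Sum>k\<in>UNIV. (if i = k then l k / A k else 0) * (if k = j then A j / l j else 0))"
      by (simp add: matrix_matrix_mult_def M1_def)
    also have "\<dots> = (if i = j then l j / A j * (A j / l j) else 0)"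
      by (simp add: if_distrib[of "\<lambda>x. x * _"] sum.delta cong: if_cong)
    also have "\<dots> = mat 1 $ i $ j" using assms[of j] by (simp add: mat_def)
    finally show ?thesis .
  qed
  have a: "M1 A l ** ?N = mat 1" "?N ** M1 A l = mat 1"
    using a1 a2 by (simp_all add: vec_eq_iff)
  show ?thesis unfolding matrix_inv_def using someI_ex[of "\<lambda>A'. M1 A l ** A' = mat 1 \<and> A' ** M1 A l = mat 1"] a by blast
qed

lemma M1_sym: "transpose (M1 A l) = M1 A l"
  by (auto simp: M1_def transpose_def vec_eq_iff)

lemma M1_swap: "x \<bullet> (M1 A l *v y) = y \<bullet> (M1 A l *v x)"
  by (metis M1_sym dot_lmul_matrix inner_commute transpose_transpose vector_transpose_matrix)

theorem theorem3p3:
  fixes A l :: "'e::finite \<Rightarrow> real"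
    and D0 :: "real^('c::finite)^'e"
    and D1 :: "real^'e^('f::finite)"
    and D2 :: "real^'e^'c"
    and U :: "real^'e \<Rightarrow> real^'f^'e"
    and T :: real
    and v v' :: "real \<Rightarrow> real^'e"
    and B :: "real \<Rightarrow> real^'c"
  assumes A_pos: "\<And>j. A j > 0"
    and l_pos: "\<And>j. l j > 0"
    and sbp: "\<And>b w. ip1 A l (D0 *v b) w = b \<bullet> (D2 *v (M1 A l *v w))"
    and U_lin: "linear U"
    and v_deriv: "\<And>t. t \<in> {0..T} \<Longrightarrow> (v has_vector_derivative v' t) (at t within {0..T})"
    and v'_cont: "continuous_on {0..T} v'"
    and B_cont: "continuous_on {0..T} B"
    and euler: "\<And>t. t \<in> {0..T} \<Longrightarrow>
        v' t + contraction A l D1 U (v t) (D1 *v v t) + D0 *v B t = 0"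
    and incompressible: "\<And>t. t \<in> {0..T} \<Longrightarrow> D2 *v (M1 A l *v v t) = 0"
  shows "\<And>t. t \<in> {0..T} \<Longrightarrow> ((\<lambda>s. Ekin A l (v s)) has_real_derivative 0) (at t within {0..T})"
proof -
  fix t assume t: "t \<in> {0..T}"
  let ?M = "M1 A l"
  let ?w = "v t" and ?u = "U (v t)"
  have d: "(v has_derivative (\<lambda>h. h *\<^sub>R v' t)) (at t within {0..T})"
    using v_deriv[OF t] by (simp add: has_vector_derivative_def)
  have dM: "((\<lambda>s. ?M *v v s) has_derivative (\<lambda>h. ?M *v (h *\<^sub>R v' t))) (at t within {0..T})"
    using bounded_linear.has_derivative[OF matrix_vector_mul_bounded_linear d] .
  have dE: "((\<lambda>s. v s \<bullet> (?M *v v s)) has_derivative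
      (\<lambda>h. v t \<bullet> (?M *v (h *\<^sub>R v' t)) + (h *\<^sub>R v' t) \<bullet> (?M *v v t))) (at t within {0..T})"
    using has_derivative_inner[OF d dM] by simp
  have key: "v t \<bullet> (?M *v v' t) = 0"
  proof -
    have c: "?M *v contraction A l D1 U ?w (D1 *v ?w) =
        (1/2) *\<^sub>R (?u *v (D1 *v ?w) - transpose D1 *v (transpose ?u *v ?w))"
      unfolding contraction_def matrix_vector_mul_assoc M1_inv[OF A_pos l_pos] by simp
    have c0: "?w \<bullet> (?M *v contraction A l D1 U ?w (D1 *v ?w)) = 0"
      unfolding c inner_scaleR_right inner_diff_right
      by (metis dot_lmul_matrix inner_commute vector_transpose_matrix right_minus_eq mult_zero_right)
    have b0: "?w \<bullet> (?M *v (D0 *v B t)) = 0"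
      using sbp[of "B t" ?w] incompressible[OF t] M1_swap[of ?w A l "D0 *v B t"]
      by (simp add: ip1_def)
    have "?M *v (v' t + contraction A l D1 U ?w (D1 *v ?w) + D0 *v B t) = 0"
      using euler[OF t] by simp
    hence "?M *v v' t + ?M *v contraction A l D1 U ?w (D1 *v ?w) + ?M *v (D0 *v B t) = 0"
      by (simp add: matrix_vector_right_distrib)
    hence "?w \<bullet> (?M *v v' t + ?M *v contraction A l D1 U ?w (D1 *v ?w) + ?M *v (D0 *v B t)) = 0"
      by simp
    thus ?thesis using c0 b0 by (simp add: inner_add_right)
  qed
  have "(\<lambda>h. v t \<bullet> (?M *v (h *\<^sub>R v' t)) + (h *\<^sub>R v' t) \<bullet> (?M *v v t)) = (\<lambda>h. 0)"
    using key M1_swap[of "v' t" A l "v t"]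
    by (simp add: matrix_vector_mult_scaleR)
  with dE have "((\<lambda>s. v s \<bullet> (?M *v v s)) has_derivative (\<lambda>h. 0)) (at t within {0..T})" by simp
  hence "((\<lambda>s. (1/2) * (v s \<bullet> (?M *v v s))) has_derivative (\<lambda>h. (1/2) * 0)) (at t within {0..T})"
    by (intro derivative_intros)
  moreover have eq: "(*) (0::real) = (\<lambda>h. 0)" by auto
  ultimately show "((\<lambda>s. Ekin A l (v s)) has_real_derivative 0) (at t within {0..T})"
    by (simp add: Ekin_def ip1_def has_field_derivative_def eq)
qed

end
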